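(* Let $\mathcal X$ be a separable metric space with at least two points. Let $\varepsilon\in[0,1)$ and let $T$ be a test (a map from $\Delta^*$ to the open subsets of $\Omega$) such that $P(T(P))\le\varepsilon$ for every $P\in\Delta^*$. Then for every $\delta\in(0,1-\varepsilon]$ there exists a probability measure $\zeta$ on $\Delta^*$ with finite support such that $\zeta(\{P\in\Delta^*:\omega\notin T(P)\})\ge1-\varepsilon-\delta$ for every $\omega\in\Omega$.
   Context: $\Omega=\mathcal X^{\mathbb N}$ with the product topology; for $\omega\in\Omega$, $t\ge0$, $\omega^t$ is the cylinder of paths agreeing with $\omega$ in the first $t$ coordinates ($\omega^0=\Omega$); $\mathcal H$ is the set of all cylinders. $\Sigma$ is a $\sigma$-algebra on $\Omega$ containing all open sets; $\mathbb P$ is the set of finitely additive probabilities on $(\Omega,\Sigma)$; $P\in\mathbb P$ is strongly nonatomic if for every $E\in\Sigma$, $\alpha\in[0,1]$ there is $F\in\Sigma$, $F\subseteq E$, with $P(F)=\alpha P(E)$. A conditional probability is a function $P:\Sigma\times\mathcal H\to[0,1]$ such that for every $t\ge0$ and $\omega$: (1) $P(\cdot\mid\omega^t)\in\mathbb P$; (2) $P(\omega^t\mid\omega^t)=1$; (3) $P(E\cap\omega^{t+n}\mid\omega^t)=P(E\mid\omega^{t+n})P(\omega^{t+n}\mid\omega^t)$ for all $E\in\Sigma$, $n\ge0$. It is a conditional opinion if $P(\cdot\mid\Omega)$ is strongly nonatomic; $\Delta^*$ is the set of conditional opinions. We write $P(E)$ for $P(E\mid\Omega)$. *)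

theory Defs
  imports "HOL-Analysis.Analysis" "HOL-Probability.Probability"
begin

text \<open>Paths: Omega = X^N is the type nat => 'x, carrying the product topology
  (the library instance of topological_space on function types).\<close>

definition cyl :: "(nat \<Rightarrow> 'x) \<Rightarrow> nat \<Rightarrow> (nat \<Rightarrow> 'x) set" where
  "cyl \<omega> t = {\<omega>'. \<forall>i<t. \<omega>' i = \<omega> i}"

definition cylinders :: "(nat \<Rightarrow> 'x) set set" where
  "cylinders = {cyl \<omega> t | \<omega> t. True}"

definition admissible_sigma :: "(nat \<Rightarrow> 'x::topological_space) set set \<Rightarrow> bool" where
  "admissible_sigma \<Sigma> \<longleftrightarrow> sigma_algebra UNIV \<Sigma> \<and> (\<forall>U. open U \<longrightarrow> U \<in> \<Sigma>)"

definition fa_prob :: "'a set set \<Rightarrow> ('a set \<Rightarrow> real) \<Rightarrow> bool" where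
  "fa_prob \<Sigma> P \<longleftrightarrow> (\<forall>E\<in>\<Sigma>. P E \<ge> 0) \<and> P UNIV = 1 \<and>
     (\<forall>A\<in>\<Sigma>. \<forall>B\<in>\<Sigma>. A \<inter> B = {} \<longrightarrow> P (A \<union> B) = P A + P B)"

definition strongly_nonatomic :: "'a set set \<Rightarrow> ('a set \<Rightarrow> real) \<Rightarrow> bool" where
  "strongly_nonatomic \<Sigma> P \<longleftrightarrow>
     (\<forall>E\<in>\<Sigma>. \<forall>\<alpha>::real. 0 \<le> \<alpha> \<and> \<alpha> \<le> 1 \<longrightarrow> (\<exists>F\<in>\<Sigma>. F \<subseteq> E \<and> P F = \<alpha> * P E))"

text \<open>A conditional probability P : Sigma x H -> [0,1], represented as a function
  P E H (E the event, H the conditioning cylinder). To have a unique representative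
  for each such map, values outside Sigma x H are fixed to 0.\<close>
definition cond_prob ::
  "(nat \<Rightarrow> 'x) set set \<Rightarrow> ((nat \<Rightarrow> 'x) set \<Rightarrow> (nat \<Rightarrow> 'x) set \<Rightarrow> real) \<Rightarrow> bool" where
  "cond_prob \<Sigma> P \<longleftrightarrow>
     (\<forall>E H. (E \<in> \<Sigma> \<and> H \<in> cylinders) \<longrightarrow> 0 \<le> P E H \<and> P E H \<le> 1) \<and>
     (\<forall>E H. \<not> (E \<in> \<Sigma> \<and> H \<in> cylinders) \<longrightarrow> P E H = 0) \<and>
     (\<forall>\<omega> t. fa_prob \<Sigma> (\<lambda>E. P E (cyl \<omega> t)) \<and>
        P (cyl \<omega> t) (cyl \<omega> t) = 1 \<and>
        (\<forall>E\<in>\<Sigma>. \<forall>n. P (E \<inter> cyl \<omega> (t + n)) (cyl \<omega> t) =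
                      P E (cyl \<omega> (t + n)) * P (cyl \<omega> (t + n)) (cyl \<omega> t)))"

definition cond_opinions ::
  "(nat \<Rightarrow> 'x) set set \<Rightarrow> ((nat \<Rightarrow> 'x) set \<Rightarrow> (nat \<Rightarrow> 'x) set \<Rightarrow> real) set" where
  "cond_opinions \<Sigma> = {P. cond_prob \<Sigma> P \<and> strongly_nonatomic \<Sigma> (\<lambda>E. P E UNIV)}"

end

theory Submission
  imports Defs
begin


definition ultra :: "'a filter \<Rightarrow> bool" where
  "ultra F \<longleftrightarrow> F \<noteq> bot \<and> (\<forall>P. eventually P F \<or> eventually (\<lambda>x. \<not> P x) F)"

lemma max_filter_is_ultra:
  assumes Fnb: "F \<noteq> bot"
  assumes max: "\<And>G. G \<noteq> bot \<Longrightarrow> G \<le> F \<Longrightarrow> F = G"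
  shows "ultra F"
proof -
  have "eventually P F \<or> eventually (\<lambda>x. \<not> P x) F" for P
  proof (cases "eventually (\<lambda>x. \<not> P x) F")
    case False
    then have "frequently P F" by (simp add: frequently_def)
    then have "inf F (principal {x. P x}) \<noteq> bot"
      unfolding trivial_limit_def eventually_inf_principal frequently_def by simp
    then have F: "F = inf F (principal {x. P x})"
      by (rule max) simp
    have "eventually P (inf F (principal {x. P x}))"
      by (simp add: eventually_inf_principal)
    then show ?thesis using F by simp
  qed simp
  then show ?thesis using Fnb by (simp add: ultra_def)
qed

lemma ultra_exists:
  fixes F :: "'a filter"
  assumes F: "F \<noteq> bot"
  shows "\<exists>U\<le>F. ultra U"
proof -
  let ?R = "{(b, a). a \<noteq> bot \<and> a \<le> b \<and> b \<le> F}"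
  have bot_notin_R: "c \<in> Chains ?R \<Longrightarrow> bot \<notin> c" for c
    by (auto simp: Chains_def)
  have [simp]: "Field ?R = {G. G \<noteq> bot \<and> G \<le> F}"
    by (auto simp: Field_def bot_unique)
  have "\<exists>m\<in>Field ?R. \<forall>a\<in>Field ?R. (m, a) \<in> ?R \<longrightarrow> a = m"
  proof (rule Zorns_po_lemma)
    show "Partial_order ?R"
      by (auto simp: partial_order_on_def preorder_on_def
          antisym_def refl_on_def trans_def Field_def bot_unique)
    show "\<exists>u\<in>Field ?R. \<forall>a\<in>C. (a, u) \<in> ?R" if C: "C \<in> Chains ?R" for C
    proof (simp, intro exI conjI ballI)
      have Inf_C: "Inf C \<noteq> bot" "Inf C \<le> F" if "C \<noteq> {}"
      proof -
        from C that have "Inf C = bot \<longleftrightarrow> (\<exists>x\<in>C. x = bot)"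
          unfolding trivial_limit_def by (intro eventually_Inf_base) (auto simp: Chains_def)
        with C show "Inf C \<noteq> bot"
          by (simp add: bot_notin_R)
        from that obtain x where "x \<in> C" by auto
        with C show "Inf C \<le> F"
          by (auto intro!: Inf_lower2[of x] simp: Chains_def)
      qed
      then have [simp]: "inf F (Inf C) = (if C = {} then F else Inf C)"
        using C by (auto simp add: inf_absorb2)
      from C show "inf F (Inf C) \<noteq> bot"
        by (simp add: F Inf_C)
      from C show "inf F (Inf C) \<le> F"
        by (simp add: Chains_def Inf_C F)
      with C show "inf F (Inf C) \<le> x" "x \<le> F" if "x \<in> C" for x
        using that  by (auto intro: Inf_lower simp: Chains_def)
    qed
  qed
  then obtain U where U1: "U \<in> Field ?R" and U2: "\<forall>a\<in>Field ?R. (U, a) \<in> ?R \<longrightarrow> a = U"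
    by blast
  have Ub: "U \<noteq> bot" "U \<le> F" using U1 by simp_all
  have Um: "U = G" if "G \<noteq> bot" "G \<le> U" for G
  proof -
    have "G \<le> F" using that(2) Ub(2) by (rule order_trans)
    then have "G \<in> Field ?R" using that(1) by simp
    moreover have "(U, G) \<in> ?R" using that Ub by simp
    ultimately show ?thesis using U2 by blast
  qed
  have "ultra U" by (rule max_filter_is_ultra[OF Ub(1) Um])
  then show ?thesis using Ub(2) by blast
qed

lemma ultra_tendsto:
  fixes f :: "'a \<Rightarrow> real"
  assumes U: "ultra U" and f: "\<And>x. f x \<in> {0..1}"
  shows "(f \<longlongrightarrow> Lim U f) U"
proof -
  have Unb: "U \<noteq> bot" using U by (simp add: ultra_def)
  let ?G = "filtermap f U"
  have "?G \<noteq> bot" using Unb by (simp add: filtermap_bot_iff)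
  moreover have "eventually (\<lambda>x. x \<in> {0..1::real}) ?G"
    using f by (simp add: eventually_filtermap)
  ultimately have "\<exists>L\<in>{0..1::real}. inf (nhds L) ?G \<noteq> bot"
    using compact_filter[THEN iffD1, OF compact_Icc[of "0::real" 1], rule_format] by simp
  then obtain L where L: "inf (nhds L) ?G \<noteq> bot" by auto
  have "(f \<longlongrightarrow> L) U"
  proof (rule topological_tendstoI)
    fix S assume S: "open S" "L \<in> S"
    show "eventually (\<lambda>x. f x \<in> S) U"
    proof (rule ccontr)
      assume "\<not> eventually (\<lambda>x. f x \<in> S) U"
      then have "eventually (\<lambda>x. f x \<notin> S) U" using U by (auto simp: ultra_def)
      then have "eventually (\<lambda>y. y \<notin> S) ?G" by (simp add: eventually_filtermap)
      moreover have "eventually (\<lambda>y. y \<in> S) (nhds L)" using S by (rule eventually_nhds_in_open)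
      ultimately have "eventually (\<lambda>y. False) (inf (nhds L) ?G)"
        unfolding eventually_inf by blast
      with L show False by (simp add: trivial_limit_def)
    qed
  qed
  then show ?thesis using Unb by (simp add: tendsto_Lim)
qed



definition xpt :: "'x \<Rightarrow> 'x \<Rightarrow> (nat \<Rightarrow> 'x) \<Rightarrow> nat \<Rightarrow> nat \<Rightarrow> (nat \<Rightarrow> 'x)" where
  "xpt a b y n i = (\<lambda>j. if j < n then y j else if j = n + i \<or> j = 2*n + i + 1 then b else a)"

definition ratio :: "'x \<Rightarrow> 'x \<Rightarrow> (nat \<Rightarrow> 'x) \<Rightarrow> (nat \<Rightarrow> 'x) set \<Rightarrow> nat \<Rightarrow> real" where
  "ratio a b y E n = real (card {i. i < n \<and> xpt a b y n i \<in> E}) / real n"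

definition D :: "nat filter \<Rightarrow> 'x \<Rightarrow> 'x \<Rightarrow> (nat \<Rightarrow> 'x) \<Rightarrow> (nat \<Rightarrow> 'x) set \<Rightarrow> real" where
  "D U a b y E = Lim U (ratio a b y E)"

definition Bset :: "'x \<Rightarrow> 'x \<Rightarrow> nat \<Rightarrow> nat \<Rightarrow> (nat \<Rightarrow> 'x) set" where
  "Bset a b n i = {p. p (n+i) = b \<and> p (2*n+i+1) = b \<and> (\<forall>j. n+i < j \<and> j \<noteq> 2*n+i+1 \<longrightarrow> p j = a)}"

definition Gs :: "'x \<Rightarrow> 'x \<Rightarrow> real \<Rightarrow> (nat \<Rightarrow> 'x) set" where
  "Gs a b s = (\<Union>ni\<in>{(n,i). i < n \<and> real i < s * real n}. Bset a b (fst ni) (snd ni))"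

lemma xpt_in_B: "xpt a b y n i \<in> Bset a b n i"
  by (auto simp: xpt_def Bset_def)

lemma B_disj:
  assumes ab: "a \<noteq> b" and p: "p \<in> Bset a b n i" "p \<in> Bset a b n' i'"
  shows "n' = n \<and> i' = i"
proof -
  have e1: "2*n+i+1 = 2*n'+i'+1"
  proof (rule ccontr)
    assume ne: "2*n+i+1 \<noteq> 2*n'+i'+1"
    show False
    proof (cases "2*n+i+1 < 2*n'+i'+1")
      case True
      then have "p (2*n'+i'+1) = a" using p(1) unfolding Bset_def by auto
      moreover have "p (2*n'+i'+1) = b" using p(2) unfolding Bset_def by auto
      ultimately show False using ab by simp
    next
      case False
      then have "2*n'+i'+1 < 2*n+i+1" using ne by simp
      then have "p (2*n+i+1) = a" using p(2) unfolding Bset_def by auto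
      moreover have "p (2*n+i+1) = b" using p(1) unfolding Bset_def by auto
      ultimately show False using ab by simp
    qed
  qed
  have e2: "n+i = n'+i'"
  proof (rule ccontr)
    assume ne: "n+i \<noteq> n'+i'"
    show False
    proof (cases "n+i < n'+i'")
      case True
      have "n'+i' \<noteq> 2*n+i+1" using e1 by simp
      then have "p (n'+i') = a" using p(1) True unfolding Bset_def by auto
      moreover have "p (n'+i') = b" using p(2) unfolding Bset_def by auto
      ultimately show False using ab by simp
    next
      case False
      then have lt: "n'+i' < n+i" using ne by simp
      have "n+i \<noteq> 2*n'+i'+1" using e1 by simp
      then have "p (n+i) = a" using p(2) lt unfolding Bset_def by auto
      moreover have "p (n+i) = b" using p(1) unfolding Bset_def by auto
      ultimately show False using ab by simp
    qed
  qed
  from e1 e2 show ?thesis by simp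
qed

lemma xpt_in_Gs:
  assumes ab: "a \<noteq> b" and i: "i < n"
  shows "xpt a b y n i \<in> Gs a b s \<longleftrightarrow> real i < s * real n"
proof
  assume "xpt a b y n i \<in> Gs a b s"
  then obtain n' i' where ni: "i' < n'" "real i' < s * real n'" "xpt a b y n i \<in> Bset a b n' i'"
    unfolding Gs_def by auto
  then have "n' = n \<and> i' = i" using B_disj[OF ab xpt_in_B ni(3)] by simp
  then show "real i < s * real n" using ni by simp
next
  assume "real i < s * real n"
  then show "xpt a b y n i \<in> Gs a b s"
    unfolding Gs_def using i xpt_in_B[of a b y n i] by (auto intro!: bexI[of _ "(n,i)"])
qed

lemma Gs_mono: assumes rs: "r \<le> s" shows "Gs a b r \<subseteq> Gs a b s"
proof -
  have "real i < s * real n" if "real i < r * real n" for n i :: nat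
    using rs that by (meson mult_right_mono of_nat_0_le_iff order_less_le_trans)
  then have "{(n,i). i < n \<and> real i < r * real n} \<subseteq> {(n,i). i < n \<and> real i < s * real n}"
    by blast
  then show ?thesis unfolding Gs_def by (rule UN_mono) (rule order_refl)
qed

lemma Gs_0: "Gs a b 0 = {}"
  unfolding Gs_def by auto

definition charge :: "'x \<Rightarrow> 'x \<Rightarrow> ((nat \<Rightarrow> 'x) set \<Rightarrow> real) \<Rightarrow> bool" where
  "charge a b Q \<longleftrightarrow> (\<forall>E. 0 \<le> Q E) \<and> Q UNIV = 1 \<and>
     (\<forall>A B. A \<inter> B = {} \<longrightarrow> Q (A \<union> B) = Q A + Q B) \<and>
     (\<forall>r s. 0 \<le> r \<and> r \<le> s \<and> s \<le> 1 \<longrightarrow> Q (Gs a b s - Gs a b r) \<le> s - r) \<and>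
     Q (- Gs a b 1) = 0"

lemma charge_nonneg: "charge a b Q \<Longrightarrow> 0 \<le> Q E"
  by (simp add: charge_def)
lemma charge_UNIV: "charge a b Q \<Longrightarrow> Q UNIV = 1"
  by (simp add: charge_def)
lemma charge_add: "charge a b Q \<Longrightarrow> A \<inter> B = {} \<Longrightarrow> Q (A \<union> B) = Q A + Q B"
  by (simp add: charge_def)
lemma charge_slab: "charge a b Q \<Longrightarrow> 0 \<le> r \<Longrightarrow> r \<le> s \<Longrightarrow> s \<le> 1 \<Longrightarrow> Q (Gs a b s - Gs a b r) \<le> s - r"
  by (simp add: charge_def)
lemma charge_out: "charge a b Q \<Longrightarrow> Q (- Gs a b 1) = 0"
  by (simp add: charge_def)

lemma charge_empty: "charge a b Q \<Longrightarrow> Q {} = 0"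
  using charge_add[of a b Q "{}" "{}"] by simp

lemma charge_diff: "charge a b Q \<Longrightarrow> A \<subseteq> B \<Longrightarrow> Q B = Q A + Q (B - A)"
  using charge_add[of a b Q A "B - A"] by (simp add: Un_absorb1 Diff_partition)

lemma charge_mono: "charge a b Q \<Longrightarrow> A \<subseteq> B \<Longrightarrow> Q A \<le> Q B"
  using charge_diff[of a b Q A B] charge_nonneg[of a b Q "B - A"] by simp

lemma charge_le1: "charge a b Q \<Longrightarrow> Q E \<le> 1"
  using charge_mono[of a b Q E UNIV] charge_UNIV[of a b Q] by simp

lemma charge_Int_diff: "charge a b Q \<Longrightarrow> Q E = Q (E \<inter> H) + Q (E - H)"
  using charge_add[of a b Q "E \<inter> H" "E - H"] by (simp add: Int_Diff_Un Int_Diff_disjoint)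



lemma Lim_eqI: "ultra U \<Longrightarrow> (f \<longlongrightarrow> c) U \<Longrightarrow> Lim U f = c"
  by (rule tendsto_Lim) (simp_all add: ultra_def)

lemma ultra_nbot: "ultra U \<Longrightarrow> U \<noteq> bot"
  by (simp add: ultra_def)

lemma card_lt_n: "card {i. i < n \<and> P i} \<le> n"
proof -
  have "card {i. i < n \<and> P i} \<le> card {..<n}" by (rule card_mono) auto
  then show ?thesis by simp
qed

lemma ratio_bounds: "ratio a b y E n \<in> {0..1}"
proof (cases "n = 0")
  case True then show ?thesis by (simp add: ratio_def)
next
  case False
  have "real (card {i. i < n \<and> xpt a b y n i \<in> E}) \<le> real n"
    using card_lt_n[of n "\<lambda>i. xpt a b y n i \<in> E"] by simp
  then show ?thesis using False by (simp add: ratio_def divide_le_eq_1)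
qed

lemma D_tendsto: assumes "ultra U" shows "(ratio a b y E \<longlongrightarrow> D U a b y E) U"
  unfolding D_def by (rule ultra_tendsto[OF assms ratio_bounds])

lemma ev_seq_U: "U \<le> sequentially \<Longrightarrow> eventually P sequentially \<Longrightarrow> eventually P U"
  by (rule filter_leD)

lemma D_evconst:
  assumes U: "ultra U" "U \<le> sequentially"
    and ev: "eventually (\<lambda>n. ratio a b y E n = c) sequentially"
  shows "D U a b y E = c"
proof -
  have "(ratio a b y E \<longlongrightarrow> c) sequentially" using ev by (rule tendsto_eventually)
  then have "(ratio a b y E \<longlongrightarrow> c) U" using U(2) by (rule tendsto_mono[rotated])
  then show ?thesis unfolding D_def by (rule Lim_eqI[OF U(1)])
qed

lemma D_add:
  assumes U: "ultra U" and AB: "A \<inter> B = {}"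
  shows "D U a b y (A \<union> B) = D U a b y A + D U a b y B"
proof -
  have "ratio a b y (A \<union> B) n = ratio a b y A n + ratio a b y B n" for n
  proof -
    have e: "{i. i < n \<and> xpt a b y n i \<in> A \<union> B} = {i. i < n \<and> xpt a b y n i \<in> A} \<union> {i. i < n \<and> xpt a b y n i \<in> B}"
      by auto
    have "card {i. i < n \<and> xpt a b y n i \<in> A \<union> B} = card {i. i < n \<and> xpt a b y n i \<in> A} + card {i. i < n \<and> xpt a b y n i \<in> B}"
      unfolding e by (rule card_Un_disjoint) (use AB in auto)
    then show ?thesis by (simp add: ratio_def add_divide_distrib)
  qed
  then have eq: "ratio a b y (A \<union> B) = (\<lambda>n. ratio a b y A n + ratio a b y B n)" by (rule ext)
  have "(ratio a b y (A \<union> B) \<longlongrightarrow> D U a b y A + D U a b y B) U"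
    unfolding eq by (rule tendsto_add[OF D_tendsto[OF U, of a b y A] D_tendsto[OF U, of a b y B]])
  then show ?thesis unfolding D_def[of U a b y "A \<union> B"] by (rule Lim_eqI[OF U])
qed

lemma D_nonneg: "ultra U \<Longrightarrow> 0 \<le> D U a b y E"
  using tendsto_lowerbound[OF D_tendsto[of U a b y E] _ ultra_nbot] ratio_bounds
  by (metis (mono_tags, lifting) always_eventually atLeastAtMost_iff)

lemma D_UNIV:
  assumes U: "ultra U" "U \<le> sequentially"
  shows "D U a b y UNIV = 1"
proof (rule D_evconst[OF U])
  show "eventually (\<lambda>n. ratio a b y UNIV n = 1) sequentially"
    using eventually_ge_at_top[of "1::nat"]
  proof eventually_elim
    case (elim n) then show ?case by (simp add: ratio_def)
  qed
qed

lemma D_local1: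
  assumes U: "ultra U" "U \<le> sequentially"
    and N: "\<And>p. (\<forall>j<N. p j = y j) \<Longrightarrow> p \<in> V"
  shows "D U a b y V = 1"
proof (rule D_evconst[OF U])
  show "eventually (\<lambda>n. ratio a b y V n = 1) sequentially"
    using eventually_ge_at_top[of "max N 1"]
  proof eventually_elim
    case (elim n)
    have "xpt a b y n i \<in> V" for i
      by (rule N) (use elim in \<open>auto simp: xpt_def\<close>)
    then have "{i. i < n \<and> xpt a b y n i \<in> V} = {..<n}" by auto
    then show ?case using elim by (simp add: ratio_def)
  qed
qed

lemma D_local0:
  assumes U: "ultra U" "U \<le> sequentially"
    and N: "\<And>p. (\<forall>j<N. p j = y j) \<Longrightarrow> p \<notin> V"
  shows "D U a b y V = 0"
proof (rule D_evconst[OF U])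
  show "eventually (\<lambda>n. ratio a b y V n = 0) sequentially"
    using eventually_ge_at_top[of "N"]
  proof eventually_elim
    case (elim n)
    have "xpt a b y n i \<notin> V" for i
      by (rule N) (use elim in \<open>auto simp: xpt_def\<close>)
    then have "{i. i < n \<and> xpt a b y n i \<in> V} = {}" by auto
    then show ?case by (simp add: ratio_def)
  qed
qed

lemma card_slab:
  fixes r s :: real
  assumes "0 \<le> r" "r \<le> s"
  shows "real (card {i. i < n \<and> \<not> real i < r * real n \<and> real i < s * real n}) \<le> (s - r) * real n + 1"
proof -
  define m where "m = nat \<lceil>r * real n\<rceil>"
  define M where "M = nat \<lceil>s * real n\<rceil>"
  have sub: "{i. i < n \<and> \<not> real i < r * real n \<and> real i < s * real n} \<subseteq> {m..<M}"
  proof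
    fix i assume i: "i \<in> {i. i < n \<and> \<not> real i < r * real n \<and> real i < s * real n}"
    then have "r * real n \<le> real i" by simp
    then have "\<lceil>r * real n\<rceil> \<le> int i" by (simp add: ceiling_le_iff)
    then have "m \<le> i" unfolding m_def by (simp add: nat_le_iff)
    moreover have "real i < s * real n" using i by simp
    then have "int i < \<lceil>s * real n\<rceil>" by (simp add: less_ceiling_iff)
    then have "i < M" unfolding M_def by (simp add: zless_nat_eq_int_zless)
    ultimately show "i \<in> {m..<M}" by simp
  qed
  have "card {i. i < n \<and> \<not> real i < r * real n \<and> real i < s * real n} \<le> M - m"
    using card_mono[OF _ sub] by simp
  moreover have "real (M - m) \<le> (s - r) * real n + 1"
  proof -
    have rn: "0 \<le> r * real n" using assms by simp
    have sn: "0 \<le> s * real n" using assms by simp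
    have "real m = real_of_int \<lceil>r * real n\<rceil>" unfolding m_def using rn by simp
    then have m1: "r * real n \<le> real m" by (simp add: le_of_int_ceiling)
    have "real M = real_of_int \<lceil>s * real n\<rceil>" unfolding M_def using sn by simp
    then have M1: "real M \<le> s * real n + 1" by (simp add: of_int_ceiling_le_add_one)
    have "r * real n \<le> s * real n" using assms by (simp add: mult_right_mono)
    show ?thesis
    proof (cases "m \<le> M")
      case True
      then have "real (M - m) = real M - real m" by simp
      then show ?thesis using m1 M1 by (simp add: algebra_simps)
    next
      case False then show ?thesis using \<open>r * real n \<le> s * real n\<close> by (simp add: algebra_simps)
    qed
  qed
  ultimately show ?thesis by linarith
qed

lemma D_slab:
  assumes U: "ultra U" "U \<le> sequentially" and ab: "a \<noteq> b"
    and rs: "0 \<le> r" "r \<le> s" "s \<le> 1"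
  shows "D U a b y (Gs a b s - Gs a b r) \<le> s - r"
proof -
  have bound: "ratio a b y (Gs a b s - Gs a b r) n \<le> (s - r) + 1 / real n" if n: "n \<ge> 1" for n
  proof -
    have "{i. i < n \<and> xpt a b y n i \<in> Gs a b s - Gs a b r} =
          {i. i < n \<and> \<not> real i < r * real n \<and> real i < s * real n}"
      using xpt_in_Gs[OF ab] by auto
    then have "real (card {i. i < n \<and> xpt a b y n i \<in> Gs a b s - Gs a b r}) \<le> (s - r) * real n + 1"
      using card_slab[OF rs(1,2)] by simp
    then have "ratio a b y (Gs a b s - Gs a b r) n \<le> ((s - r) * real n + 1) / real n"
      unfolding ratio_def using n by (simp add: divide_right_mono)
    also have "\<dots> = (s - r) + 1 / real n" using n by (simp add: field_simps)
    finally show ?thesis .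
  qed
  have lim: "((\<lambda>n. (s - r) + 1 / real n) \<longlongrightarrow> s - r) U"
    using tendsto_mono[OF U(2) tendsto_add[OF tendsto_const lim_1_over_n]] by simp
  have ev: "eventually (\<lambda>n. ratio a b y (Gs a b s - Gs a b r) n \<le> (s - r) + 1 / real n) U"
    using ev_seq_U[OF U(2) eventually_ge_at_top[of "1::nat"]] by (rule eventually_mono) (rule bound)
  show ?thesis
    using tendsto_le[OF ultra_nbot[OF U(1)] lim D_tendsto[OF U(1)] ev] .
qed

lemma D_out:
  assumes U: "ultra U" "U \<le> sequentially" and ab: "a \<noteq> b"
  shows "D U a b y (- Gs a b 1) = 0"
proof (rule D_evconst[OF U])
  show "eventually (\<lambda>n. ratio a b y (- Gs a b 1) n = 0) sequentially"
  proof (rule always_eventually, rule allI)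
    fix n
    have "{i. i < n \<and> xpt a b y n i \<in> - Gs a b 1} = {}"
      using xpt_in_Gs[OF ab] by auto
    then show "ratio a b y (- Gs a b 1) n = 0" by (simp add: ratio_def)
  qed
qed

lemma D_charge:
  assumes U: "ultra U" "U \<le> sequentially" and ab: "a \<noteq> b"
  shows "charge a b (D U a b y)"
  unfolding charge_def
  by (intro conjI allI impI D_nonneg[OF U(1)] D_UNIV[OF U] D_add[OF U(1)] D_out[OF U ab])
     (auto intro: D_slab[OF U ab])



lemma charge_mix:
  fixes Q :: "nat \<Rightarrow> (nat \<Rightarrow> 'x) set \<Rightarrow> real" and a b :: 'x
  assumes R: "R > 0" and Q: "\<And>r. r < R \<Longrightarrow> charge a b (Q r)"
  shows "charge a b (\<lambda>E. (\<Sum>r<R. Q r E) / real R)"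
  unfolding charge_def
proof (intro conjI allI impI)
  fix E show "0 \<le> (\<Sum>r<R. Q r E) / real R"
    by (auto intro!: divide_nonneg_nonneg sum_nonneg charge_nonneg[OF Q])
next
  show "(\<Sum>r<R. Q r UNIV) / real R = 1"
    using charge_UNIV[OF Q] R by simp
next
  fix A B :: "(nat \<Rightarrow> 'x) set" assume "A \<inter> B = {}"
  then have "(\<Sum>r<R. Q r (A \<union> B)) = (\<Sum>r<R. Q r A) + (\<Sum>r<R. Q r B)"
    using charge_add[OF Q] by (simp add: sum.distrib)
  then show "(\<Sum>r<R. Q r (A \<union> B)) / real R = (\<Sum>r<R. Q r A) / real R + (\<Sum>r<R. Q r B) / real R"
    by (simp add: add_divide_distrib)
next
  fix r s :: real assume rs: "0 \<le> r \<and> r \<le> s \<and> s \<le> 1"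
  have "(\<Sum>k<R. Q k (Gs a b s - Gs a b r)) \<le> (\<Sum>k<R. s - r)"
    by (rule sum_mono) (use charge_slab[OF Q] rs in auto)
  then show "(\<Sum>k<R. Q k (Gs a b s - Gs a b r)) / real R \<le> s - r"
    using R by (simp add: divide_le_eq mult.commute)
next
  show "(\<Sum>r<R. Q r (- Gs a b 1)) / real R = 0"
    using charge_out[OF Q] by simp
qed

lemma charge_lim:
  fixes Q :: "'s \<Rightarrow> (nat \<Rightarrow> 'x) set \<Rightarrow> real" and a b :: 'x
  assumes V: "ultra V" and Q: "\<And>S. charge a b (Q S)"
  shows "charge a b (\<lambda>E. Lim V (\<lambda>S. Q S E))"
proof -
  have tl: "((\<lambda>S. Q S E) \<longlongrightarrow> Lim V (\<lambda>S. Q S E)) V" for E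
    by (rule ultra_tendsto[OF V]) (use charge_nonneg[OF Q] charge_le1[OF Q] in auto)
  have nb: "V \<noteq> bot" using V by (simp add: ultra_def)
  show ?thesis
    unfolding charge_def
  proof (intro conjI allI impI)
    fix E show "0 \<le> Lim V (\<lambda>S. Q S E)"
      by (rule tendsto_lowerbound[OF tl _ nb]) (use charge_nonneg[OF Q] in auto)
  next
    show "Lim V (\<lambda>S. Q S UNIV) = 1"
      using charge_UNIV[OF Q] Lim_eqI[OF V tendsto_const] by simp
  next
    fix A B :: "(nat \<Rightarrow> 'x) set" assume AB: "A \<inter> B = {}"
    have eq: "(\<lambda>S. Q S (A \<union> B)) = (\<lambda>S. Q S A + Q S B)"
      using charge_add[OF Q AB] by (intro ext) auto
    have "((\<lambda>S. Q S (A \<union> B)) \<longlongrightarrow> Lim V (\<lambda>S. Q S A) + Lim V (\<lambda>S. Q S B)) V"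
      unfolding eq by (rule tendsto_add[OF tl tl])
    then show "Lim V (\<lambda>S. Q S (A \<union> B)) = Lim V (\<lambda>S. Q S A) + Lim V (\<lambda>S. Q S B)"
      by (rule Lim_eqI[OF V])
  next
    fix r s :: real assume rs: "0 \<le> r \<and> r \<le> s \<and> s \<le> 1"
    show "Lim V (\<lambda>S. Q S (Gs a b s - Gs a b r)) \<le> s - r"
      by (rule tendsto_upperbound[OF tl _ nb]) (use charge_slab[OF Q] rs in auto)
  next
    show "Lim V (\<lambda>S. Q S (- Gs a b 1)) = 0"
      using charge_out[OF Q] Lim_eqI[OF V tendsto_const] by simp
  qed
qed

lemma charge_split:
  assumes Q: "charge a b Q" and al: "0 \<le> \<alpha>" "\<alpha> \<le> 1"
  shows "\<exists>s. 0 \<le> s \<and> s \<le> 1 \<and> Q (E \<inter> Gs a b s) = \<alpha> * Q E"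
proof -
  define f where "f s = Q (E \<inter> Gs a b s)" for s
  have step: "f s - f r \<le> s - r \<and> f r \<le> f s" if "0 \<le> r" "r \<le> s" "s \<le> 1" for r s
  proof -
    have sub: "E \<inter> Gs a b r \<subseteq> E \<inter> Gs a b s" using Gs_mono[OF that(2), of a b] by auto
    have "f s = f r + Q (E \<inter> Gs a b s - E \<inter> Gs a b r)"
      unfolding f_def by (rule charge_diff[OF Q sub])
    moreover have "Q (E \<inter> Gs a b s - E \<inter> Gs a b r) \<le> Q (Gs a b s - Gs a b r)"
      by (rule charge_mono[OF Q]) auto
    moreover have "Q (Gs a b s - Gs a b r) \<le> s - r" by (rule charge_slab[OF Q that])
    moreover have "0 \<le> Q (E \<inter> Gs a b s - E \<inter> Gs a b r)" by (rule charge_nonneg[OF Q])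
    ultimately show ?thesis by linarith
  qed
  have "1-lipschitz_on {0..1} f"
  proof (rule lipschitz_onI)
    fix x y :: real assume xy: "x \<in> {0..1}" "y \<in> {0..1}"
    show "dist (f x) (f y) \<le> 1 * dist x y"
    proof (cases "x \<le> y")
      case True
      then show ?thesis using step[of x y] xy by (simp add: dist_real_def)
    next
      case False
      then show ?thesis using step[of y x] xy by (simp add: dist_real_def)
    qed
  qed simp
  then have cont: "continuous_on {0..1} f" by (rule lipschitz_on_continuous_on)
  have f0: "f 0 = 0" unfolding f_def Gs_0 using charge_empty[OF Q] by simp
  have f1: "f 1 = Q E"
  proof -
    have "Q E = Q (E \<inter> Gs a b 1) + Q (E - Gs a b 1)" by (rule charge_Int_diff[OF Q])
    moreover have "Q (E - Gs a b 1) \<le> Q (- Gs a b 1)" by (rule charge_mono[OF Q]) auto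
    moreover have "0 \<le> Q (E - Gs a b 1)" by (rule charge_nonneg[OF Q])
    ultimately show ?thesis unfolding f_def using charge_out[OF Q] by linarith
  qed
  have "f 0 \<le> \<alpha> * Q E" using f0 al charge_nonneg[OF Q] by simp
  moreover have "\<alpha> * Q E \<le> f 1" using f1 al charge_nonneg[OF Q, of E]
    by (simp add: mult_left_le_one_le)
  ultimately obtain s where "0 \<le> s" "s \<le> 1" "f s = \<alpha> * Q E"
    using IVT'[of f 0 "\<alpha> * Q E" 1, OF _ _ _ cont] by auto
  then show ?thesis unfolding f_def by blast
qed



lemma adm_sa: "admissible_sigma \<Sigma> \<Longrightarrow> sigma_algebra UNIV \<Sigma>"
  by (simp add: admissible_sigma_def)

lemma adm_open: "admissible_sigma \<Sigma> \<Longrightarrow> open A \<Longrightarrow> A \<in> \<Sigma>"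
  by (simp add: admissible_sigma_def)

lemma adm_closed:
  assumes S: "admissible_sigma \<Sigma>" and A: "closed A"
  shows "A \<in> \<Sigma>"
proof -
  have "- A \<in> \<Sigma>" using A adm_open[OF S] by (simp add: open_Compl)
  then have "UNIV - (- A) \<in> \<Sigma>" using sigma_algebra.axioms(1)[OF adm_sa[OF S]]
    by (simp add: algebra.compl_sets Compl_eq_Diff_UNIV sigma_algebra.axioms(1)[OF adm_sa[OF S]] algebra_def)
  then show ?thesis by simp
qed

lemma adm_Int:
  assumes S: "admissible_sigma \<Sigma>" and A: "A \<in> \<Sigma>" and B: "B \<in> \<Sigma>"
  shows "A \<inter> B \<in> \<Sigma>"
proof -
  interpret sigma_algebra UNIV \<Sigma> by (rule adm_sa[OF S])
  have "A - (A - B) \<in> \<Sigma>" using A B by (intro Diff)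
  moreover have "A - (A - B) = A \<inter> B" by blast
  ultimately show ?thesis by simp
qed

lemma adm_Un:
  assumes S: "admissible_sigma \<Sigma>" and A: "A \<in> \<Sigma>" and B: "B \<in> \<Sigma>"
  shows "A \<union> B \<in> \<Sigma>"
proof -
  interpret sigma_algebra UNIV \<Sigma> by (rule adm_sa[OF S])
  show ?thesis using A B by (rule Un)
qed

lemma adm_UNIV: "admissible_sigma \<Sigma> \<Longrightarrow> UNIV \<in> \<Sigma>"
  by (simp add: adm_open)

lemma closed_coord: "closed {p :: nat \<Rightarrow> 'x::metric_space. p j = c}"
  by (rule closed_Collect_eq) (auto intro: continuous_on_product_coordinates continuous_on_const)

lemma closed_cyl: "closed (cyl (\<omega> :: nat \<Rightarrow> 'x::metric_space) t)"
proof -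
  have "cyl \<omega> t = (\<Inter>j\<in>{..<t}. {p. p j = \<omega> j})" by (auto simp: cyl_def)
  then show ?thesis by (simp add: closed_INT closed_coord)
qed

lemma closed_Bset: "closed (Bset (a::'x::metric_space) b n i)"
proof -
  have "Bset a b n i = {p. p (n+i) = b} \<inter> {p. p (2*n+i+1) = b} \<inter>
      (\<Inter>j\<in>{j. n+i < j \<and> j \<noteq> 2*n+i+1}. {p. p j = a})"
    by (auto simp: Bset_def)
  then show ?thesis by (simp add: closed_INT closed_coord closed_Int)
qed

lemma Gs_in:
  assumes S: "admissible_sigma \<Sigma>"
  shows "Gs (a::'x::metric_space) b s \<in> \<Sigma>"
proof -
  have "Gs a b s = (\<Union>ni\<in>{(n,i). i < n \<and> real i < s * real n}. Bset a b (fst ni) (snd ni))"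
    by (simp add: Gs_def)
  also have "\<dots> \<in> \<Sigma>"
    by (rule sigma_algebra.countable_UN[OF adm_sa[OF S]]) (auto intro: adm_closed[OF S closed_Bset])
  finally show ?thesis .
qed

lemma cyl_in_cyls: "cyl \<omega> t \<in> cylinders"
  by (auto simp: cylinders_def)

lemma cyl0: "cyl \<omega> 0 = UNIV"
  by (simp add: cyl_def)

lemma UNIV_cyls: "UNIV \<in> cylinders"
  using cyl_in_cyls[of undefined 0] by (simp add: cyl0)

definition yH :: "'x \<Rightarrow> (nat \<Rightarrow> 'x) set \<Rightarrow> (nat \<Rightarrow> 'x)" where
  "yH a H = (\<lambda>i. if (\<forall>p\<in>H. \<forall>q\<in>H. p i = q i) then (SOME p. p \<in> H) i else a)"

lemma yH_cyl:
  assumes ab: "a \<noteq> b"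
  shows "yH a (cyl \<omega> t) = (\<lambda>i. if i < t then \<omega> i else a)"
proof (rule ext)
  fix i
  have om: "\<omega> \<in> cyl \<omega> t" by (simp add: cyl_def)
  show "yH a (cyl \<omega> t) i = (if i < t then \<omega> i else a)"
  proof (cases "i < t")
    case True
    have all: "\<forall>p\<in>cyl \<omega> t. \<forall>q\<in>cyl \<omega> t. p i = q i" using True by (simp add: cyl_def)
    have "(SOME p. p \<in> cyl \<omega> t) \<in> cyl \<omega> t" using om by (rule someI[where P="\<lambda>p. p \<in> cyl \<omega> t"])
    then have "(SOME p. p \<in> cyl \<omega> t) i = \<omega> i" using True by (simp add: cyl_def)
    then show ?thesis using all True by (simp add: yH_def)
  next
    case False
    have "fun_upd \<omega> i a \<in> cyl \<omega> t" "fun_upd \<omega> i b \<in> cyl \<omega> t" using False by (auto simp: cyl_def)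
    moreover have "(fun_upd \<omega> i a) i \<noteq> (fun_upd \<omega> i b) i" using ab by simp
    ultimately have nall: "\<not> (\<forall>p\<in>cyl \<omega> t. \<forall>q\<in>cyl \<omega> t. p i = q i)" by blast
    show ?thesis unfolding yH_def using False by (simp only: nall if_False)
  qed
qed

lemma D_cyl:
  assumes U: "ultra U" "U \<le> sequentially"
  shows "D U a b y (cyl \<omega> t) = (if (\<forall>i<t. y i = \<omega> i) then 1 else 0)"
proof (cases "\<forall>i<t. y i = \<omega> i")
  case True
  have "D U a b y (cyl \<omega> t) = 1"
    by (rule D_local1[OF U, of t]) (use True in \<open>auto simp: cyl_def\<close>)
  then show ?thesis using True by simp
next
  case False
  have "D U a b y (cyl \<omega> t) = 0"
    by (rule D_local0[OF U, of t]) (use False in \<open>auto simp: cyl_def\<close>)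
  then show ?thesis using False by simp
qed



definition Qh :: "nat filter \<Rightarrow> 'x \<Rightarrow> 'x \<Rightarrow> ((nat \<Rightarrow> 'x) set \<Rightarrow> real) \<Rightarrow> (nat \<Rightarrow> 'x) set \<Rightarrow> (nat \<Rightarrow> 'x) set \<Rightarrow> real" where
  "Qh U a b P0 H E = (if 0 < P0 H then P0 (E \<inter> H) / P0 H else D U a b (yH a H) E)"

definition condP :: "(nat \<Rightarrow> 'x) set set \<Rightarrow> nat filter \<Rightarrow> 'x \<Rightarrow> 'x \<Rightarrow> ((nat \<Rightarrow> 'x) set \<Rightarrow> real) \<Rightarrow> (nat \<Rightarrow> 'x) set \<Rightarrow> (nat \<Rightarrow> 'x) set \<Rightarrow> real" where
  "condP \<Sigma> U a b P0 E H = (if E \<in> \<Sigma> \<and> H \<in> cylinders then Qh U a b P0 H E else 0)"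

context
  fixes U :: "nat filter" and a b :: "'x::metric_space" and P0 :: "(nat \<Rightarrow> 'x) set \<Rightarrow> real"
  assumes U: "ultra U" "U \<le> sequentially" and ab: "a \<noteq> b" and P0: "charge a b P0"
begin

lemma Dch: "charge a b (D U a b y)"
  by (rule D_charge[OF U ab])

lemma Qh_nonneg: "0 \<le> Qh U a b P0 H E"
  unfolding Qh_def using charge_nonneg[OF P0] charge_nonneg[OF Dch] by simp

lemma Qh_le1: "Qh U a b P0 H E \<le> 1"
proof (cases "0 < P0 H")
  case True
  have "P0 (E \<inter> H) \<le> P0 H" by (rule charge_mono[OF P0]) auto
  then show ?thesis using True by (simp add: Qh_def)
next
  case False then show ?thesis using charge_le1[OF Dch] by (simp add: Qh_def)
qed

lemma Qh_add: "A \<inter> B = {} \<Longrightarrow> Qh U a b P0 H (A \<union> B) = Qh U a b P0 H A + Qh U a b P0 H B"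
proof -
  assume AB: "A \<inter> B = {}"
  have "P0 ((A \<union> B) \<inter> H) = P0 (A \<inter> H) + P0 (B \<inter> H)"
  proof -
    have "(A \<union> B) \<inter> H = (A \<inter> H) \<union> (B \<inter> H)" by blast
    moreover have "(A \<inter> H) \<inter> (B \<inter> H) = {}" using AB by blast
    ultimately show ?thesis using charge_add[OF P0, of "A \<inter> H" "B \<inter> H"] by simp
  qed
  then show ?thesis using charge_add[OF Dch AB] by (simp add: Qh_def add_divide_distrib)
qed

lemma Qh_UNIV: "Qh U a b P0 H UNIV = 1"
  using charge_UNIV[OF Dch] by (simp add: Qh_def)

lemma yH_in: "yH a (cyl \<omega> t) \<in> cyl \<omega> t"
  unfolding yH_cyl[OF ab] by (simp add: cyl_def)

lemma Qh_self: "Qh U a b P0 (cyl \<omega> t) (cyl \<omega> t) = 1"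
proof (cases "0 < P0 (cyl \<omega> t)")
  case True then show ?thesis by (simp add: Qh_def)
next
  case False
  have c: "\<forall>i<t. yH a (cyl \<omega> t) i = \<omega> i" using yH_in[of \<omega> t] by (simp add: cyl_def)
  have "D U a b (yH a (cyl \<omega> t)) (cyl \<omega> t) = 1"
    using D_cyl[OF U, of a b "yH a (cyl \<omega> t)" \<omega> t] c by simp
  then show ?thesis using False by (simp add: Qh_def)
qed

lemma Qh_chain:
  "Qh U a b P0 (cyl \<omega> t) (E \<inter> cyl \<omega> (t + n)) =
   Qh U a b P0 (cyl \<omega> (t + n)) E * Qh U a b P0 (cyl \<omega> t) (cyl \<omega> (t + n))"
proof -
  let ?H = "cyl \<omega> t" and ?H' = "cyl \<omega> (t + n)"
  have sub: "?H' \<subseteq> ?H" by (auto simp: cyl_def)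
  have le: "P0 ?H' \<le> P0 ?H" by (rule charge_mono[OF P0 sub])
  have nn: "0 \<le> P0 ?H'" by (rule charge_nonneg[OF P0])
  show ?thesis
  proof (cases "0 < P0 ?H")
    case H: True
    show ?thesis
    proof (cases "0 < P0 ?H'")
      case True
      have e1: "E \<inter> ?H' \<inter> ?H = E \<inter> ?H'" using sub by auto
      have e2: "?H' \<inter> ?H = ?H'" using sub by auto
      show ?thesis using H True by (simp add: Qh_def e1 e2)
    next
      case False
      then have z: "P0 ?H' = 0" using nn by simp
      have "P0 (E \<inter> ?H' \<inter> ?H) \<le> P0 ?H'" by (rule charge_mono[OF P0]) auto
      then have "P0 (E \<inter> ?H' \<inter> ?H) = 0" using z charge_nonneg[OF P0, of "E \<inter> ?H' \<inter> ?H"] by simp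
      moreover have "?H' \<inter> ?H = ?H'" using sub by auto
      ultimately show ?thesis using H z by (simp add: Qh_def)
    qed
  next
    case False
    then have z: "\<not> 0 < P0 ?H'" using le by simp
    let ?y = "yH a ?H"
    have yform: "?y = (\<lambda>i. if i < t then \<omega> i else a)" by (rule yH_cyl[OF ab])
    show ?thesis
    proof (cases "\<forall>i<t+n. ?y i = \<omega> i")
      case True
      have yeq: "yH a ?H' = ?y"
        unfolding yform yH_cyl[OF ab]
      proof (rule ext)
        fix i show "(if i < t + n then \<omega> i else a) = (if i < t then \<omega> i else a)"
          using True unfolding yform by (cases "i < t"; cases "i < t + n") auto
      qed
      have D1: "D U a b ?y ?H' = 1" using True D_cyl[OF U, of a b ?y \<omega> "t+n"] by simp
      have "D U a b ?y E = D U a b ?y (E \<inter> ?H') + D U a b ?y (E - ?H')"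
        by (rule charge_Int_diff[OF Dch])
      moreover have "D U a b ?y (E - ?H') \<le> D U a b ?y (- ?H')" by (rule charge_mono[OF Dch]) auto
      moreover have "D U a b ?y (- ?H') = 0"
        using charge_Int_diff[OF Dch, of ?y UNIV ?H'] D1 charge_UNIV[OF Dch] by (simp add: Compl_eq_Diff_UNIV)
      moreover have "0 \<le> D U a b ?y (E - ?H')" by (rule charge_nonneg[OF Dch])
      ultimately have "D U a b ?y (E \<inter> ?H') = D U a b ?y E" by linarith
      then show ?thesis using False z D1 yeq by (simp add: Qh_def)
    next
      case nt: False
      have D0: "D U a b ?y ?H' = 0" using nt D_cyl[OF U, of a b ?y \<omega> "t+n"] by simp
      have "D U a b ?y (E \<inter> ?H') \<le> D U a b ?y ?H'" by (rule charge_mono[OF Dch]) auto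
      then have "D U a b ?y (E \<inter> ?H') = 0" using D0 charge_nonneg[OF Dch, of ?y "E \<inter> ?H'"] by simp
      then show ?thesis using False z D0 by (simp add: Qh_def)
    qed
  qed
qed

lemma condP_in:
  fixes \<Sigma> :: "(nat \<Rightarrow> 'x) set set"
  assumes S: "admissible_sigma \<Sigma>"
  shows "condP \<Sigma> U a b P0 \<in> cond_opinions \<Sigma>"
proof -
  let ?P = "condP \<Sigma> U a b P0"
  have cylS: "cyl \<omega> t \<in> \<Sigma>" for \<omega> t by (rule adm_closed[OF S closed_cyl])
  have QU: "Qh U a b P0 UNIV E = P0 E" for E
    using charge_UNIV[OF P0] by (simp add: Qh_def)
  have c1: "\<forall>E H. E \<in> \<Sigma> \<and> H \<in> cylinders \<longrightarrow> 0 \<le> ?P E H \<and> ?P E H \<le> 1"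
    by (simp add: condP_def Qh_nonneg Qh_le1)
  have c2: "\<forall>E H. \<not> (E \<in> \<Sigma> \<and> H \<in> cylinders) \<longrightarrow> ?P E H = 0"
    by (simp add: condP_def)
  have c3: "fa_prob \<Sigma> (\<lambda>E. ?P E (cyl \<omega> t)) \<and> ?P (cyl \<omega> t) (cyl \<omega> t) = 1 \<and>
        (\<forall>E\<in>\<Sigma>. \<forall>n. ?P (E \<inter> cyl \<omega> (t + n)) (cyl \<omega> t) =
                      ?P E (cyl \<omega> (t + n)) * ?P (cyl \<omega> (t + n)) (cyl \<omega> t))" for \<omega> t
  proof (intro conjI ballI allI)
    show "fa_prob \<Sigma> (\<lambda>E. ?P E (cyl \<omega> t))"
      unfolding fa_prob_def
    proof (intro conjI ballI impI)
      fix E assume "E \<in> \<Sigma>" then show "0 \<le> ?P E (cyl \<omega> t)"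
        by (simp add: condP_def Qh_nonneg)
    next
      show "?P UNIV (cyl \<omega> t) = 1"
        using adm_UNIV[OF S] by (simp add: condP_def Qh_UNIV cyl_in_cyls)
    next
      fix A B assume AB: "A \<in> \<Sigma>" "B \<in> \<Sigma>" "A \<inter> B = {}"
      then show "?P (A \<union> B) (cyl \<omega> t) = ?P A (cyl \<omega> t) + ?P B (cyl \<omega> t)"
        using adm_Un[OF S AB(1,2)] by (simp add: condP_def Qh_add cyl_in_cyls)
    qed
  next
    show "?P (cyl \<omega> t) (cyl \<omega> t) = 1"
      using cylS by (simp add: condP_def Qh_self cyl_in_cyls)
  next
    fix E n assume E: "E \<in> \<Sigma>"
    have "E \<inter> cyl \<omega> (t + n) \<in> \<Sigma>" by (rule adm_Int[OF S E cylS])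
    then show "?P (E \<inter> cyl \<omega> (t + n)) (cyl \<omega> t) =
               ?P E (cyl \<omega> (t + n)) * ?P (cyl \<omega> (t + n)) (cyl \<omega> t)"
      using E cylS by (simp add: condP_def cyl_in_cyls Qh_chain)
  qed
  have c4: "strongly_nonatomic \<Sigma> (\<lambda>E. ?P E UNIV)"
    unfolding strongly_nonatomic_def
  proof (intro ballI allI impI)
    fix E and \<alpha> :: real assume E: "E \<in> \<Sigma>" and al: "0 \<le> \<alpha> \<and> \<alpha> \<le> 1"
    obtain s where s: "0 \<le> s" "s \<le> 1" "P0 (E \<inter> Gs a b s) = \<alpha> * P0 E"
      using charge_split[OF P0, of \<alpha> E] al by auto
    have F: "E \<inter> Gs a b s \<in> \<Sigma>" by (rule adm_Int[OF S E Gs_in[OF S]])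
    show "\<exists>F\<in>\<Sigma>. F \<subseteq> E \<and> ?P F UNIV = \<alpha> * ?P E UNIV"
    proof (intro bexI conjI)
      show "?P (E \<inter> Gs a b s) UNIV = \<alpha> * ?P E UNIV"
        using F E s(3) by (simp add: condP_def UNIV_cyls QU)
    qed (use F in auto)
  qed
  show ?thesis
    unfolding cond_opinions_def cond_prob_def using c1 c2 c3 c4 by blast
qed

lemma condP_UNIV:
  "E \<in> \<Sigma> \<Longrightarrow> condP \<Sigma> U a b P0 E UNIV = P0 E"
  using charge_UNIV[OF P0] by (simp add: condP_def Qh_def UNIV_cyls)

end



lemma key_ineq:
  fixes c d :: real
  assumes d0: "0 \<le> d" and dc: "d < c" and c1: "c \<le> 1"
  defines "\<beta> \<equiv> (1 + d / c) / 2"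
  shows "0 < \<beta>" "\<beta> < 1" "1 - (1 - \<beta>) * c < \<beta> powr d" "0 < 1 - (1 - \<beta>) * c"
proof -
  have c0: "0 < c" using d0 dc by simp
  have dc1: "d / c < 1" using dc c0 by simp
  have dc0: "0 \<le> d / c" using d0 c0 by simp
  show b0: "0 < \<beta>" unfolding \<beta>_def using dc0 by simp
  show b1: "\<beta> < 1" unfolding \<beta>_def using dc1 by simp
  have cb: "d < c * \<beta>" unfolding \<beta>_def using c0 dc by (simp add: field_simps)
  have lnb: "1 - 1 / \<beta> \<le> ln \<beta>"
    using ln_le_minus_one[of "1 / \<beta>"] b0 by (simp add: ln_div)
  have "1 + d * (1 - 1 / \<beta>) \<le> 1 + d * ln \<beta>"
    using lnb d0 by (simp add: mult_left_mono)
  also have "\<dots> \<le> exp (d * ln \<beta>)" by (rule exp_ge_add_one_self)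
  also have "\<dots> = \<beta> powr d" using b0 by (simp add: powr_def mult.commute)
  finally have A: "1 + d * (1 - 1 / \<beta>) \<le> \<beta> powr d" .
  have "d * (1 / \<beta> - 1) < c * (1 - \<beta>)"
  proof -
    have "d * (1 / \<beta> - 1) = d * (1 - \<beta>) / \<beta>" using b0 by (simp add: field_simps)
    also have "\<dots> < c * \<beta> * (1 - \<beta>) / \<beta>"
      using cb b0 b1 by (intro divide_strict_right_mono mult_strict_right_mono) auto
    also have "\<dots> = c * (1 - \<beta>)" using b0 by simp
    finally show ?thesis .
  qed
  then show "1 - (1 - \<beta>) * c < \<beta> powr d" using A by (simp add: algebra_simps)
  show "0 < 1 - (1 - \<beta>) * c"
  proof -
    have "(1 - \<beta>) * c \<le> (1 - \<beta>) * 1" using b1 c1 by (intro mult_left_mono) auto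
    then show ?thesis using b0 by simp
  qed
qed

definition pick :: "'p set \<Rightarrow> ('p \<Rightarrow> 'w set) \<Rightarrow> real \<Rightarrow> real \<Rightarrow> ('p \<Rightarrow> nat) \<Rightarrow> 'w" where
  "pick S T \<beta> c L = (SOME \<omega>. c * (\<Sum>P\<in>S. \<beta> ^ L P) < (\<Sum>P\<in>{P\<in>S. \<omega> \<in> T P}. \<beta> ^ L P))"

primrec Lw :: "'p set \<Rightarrow> ('p \<Rightarrow> 'w set) \<Rightarrow> real \<Rightarrow> real \<Rightarrow> nat \<Rightarrow> 'p \<Rightarrow> nat" where
  "Lw S T \<beta> c 0 = (\<lambda>P. 0)"
| "Lw S T \<beta> c (Suc r) = (\<lambda>P. Lw S T \<beta> c r P + (if pick S T \<beta> c (Lw S T \<beta> c r) \<in> T P then 1 else 0))"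

lemma hedge:
  fixes S :: "'p set" and T :: "'p \<Rightarrow> 'w set" and c d :: real
  assumes S: "finite S" "S \<noteq> {}"
    and d0: "0 \<le> d" and dc: "d < c" and c1: "c \<le> 1"
    and step: "\<And>w. (\<forall>P\<in>S. 0 < w P) \<Longrightarrow> \<exists>\<omega>. c * (\<Sum>P\<in>S. w P) < (\<Sum>P\<in>{P\<in>S. \<omega> \<in> T P}. w P)"
  shows "\<exists>R>0. \<exists>om :: nat \<Rightarrow> 'w. \<forall>P\<in>S. d * real R \<le> real (card {r. r < R \<and> om r \<in> T P})"
proof -
  define \<beta> where "\<beta> = (1 + d / c) / 2"
  note ki = key_ineq[OF d0 dc c1, folded \<beta>_def]
  define q where "q = 1 - (1 - \<beta>) * c"
  define L where "L = Lw S T \<beta> c"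
  define om where "om r = pick S T \<beta> c (L r)" for r
  define \<Phi> where "\<Phi> r = (\<Sum>P\<in>S. \<beta> ^ L r P)" for r
  have pick_prop: "c * \<Phi> r < (\<Sum>P\<in>{P\<in>S. om r \<in> T P}. \<beta> ^ L r P)" for r
  proof -
    have "\<exists>\<omega>. c * (\<Sum>P\<in>S. \<beta> ^ L r P) < (\<Sum>P\<in>{P\<in>S. \<omega> \<in> T P}. \<beta> ^ L r P)"
      using step[of "\<lambda>P. \<beta> ^ L r P"] ki(1) by simp
    then show ?thesis unfolding om_def pick_def \<Phi>_def by (rule someI_ex)
  qed
  have Lsuc: "L (Suc r) P = L r P + (if om r \<in> T P then 1 else 0)" for r P
    by (simp add: L_def om_def)
  have Lcard: "L r P = card {j. j < r \<and> om j \<in> T P}" for r P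
  proof (induction r)
    case 0 then show ?case by (simp add: L_def)
  next
    case (Suc r)
    have "{j. j < Suc r \<and> om j \<in> T P} = {j. j < r \<and> om j \<in> T P} \<union> (if om r \<in> T P then {r} else {})"
      by (auto simp: less_Suc_eq)
    then have "card {j. j < Suc r \<and> om j \<in> T P} = card {j. j < r \<and> om j \<in> T P} + (if om r \<in> T P then 1 else 0)"
      by (simp add: card_insert_if)
    then show ?case using Suc Lsuc by simp
  qed
  have Phi_step: "\<Phi> (Suc r) \<le> q * \<Phi> r" for r
  proof -
    have "\<Phi> (Suc r) = (\<Sum>P\<in>S. \<beta> ^ L r P - (1 - \<beta>) * (if om r \<in> T P then \<beta> ^ L r P else 0))"
      unfolding \<Phi>_def by (intro sum.cong refl) (simp add: Lsuc algebra_simps)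
    also have "\<dots> = \<Phi> r - (1 - \<beta>) * (\<Sum>P\<in>{P\<in>S. om r \<in> T P}. \<beta> ^ L r P)"
      by (simp add: sum_subtractf sum_distrib_left sum.inter_filter[OF S(1)] \<Phi>_def)
    also have "\<dots> \<le> \<Phi> r - (1 - \<beta>) * (c * \<Phi> r)"
      using pick_prop[of r] ki(2) by (intro diff_left_mono mult_left_mono) auto
    also have "\<dots> = q * \<Phi> r" by (simp add: q_def algebra_simps)
    finally show ?thesis .
  qed
  have q0: "0 < q" using ki(4) by (simp add: q_def)
  have Phi_bound: "\<Phi> r \<le> real (card S) * q ^ r" for r
  proof (induction r)
    case 0 then show ?case by (simp add: \<Phi>_def L_def)
  next
    case (Suc r)
    have "\<Phi> (Suc r) \<le> q * \<Phi> r" by (rule Phi_step)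
    also have "\<dots> \<le> q * (real (card S) * q ^ r)" using Suc q0 by (intro mult_left_mono) auto
    finally show ?case by (simp add: algebra_simps)
  qed
  have single: "\<beta> ^ L r P \<le> \<Phi> r" if "P \<in> S" for r P
    unfolding \<Phi>_def using that S(1) ki(1) by (intro member_le_sum) auto
  define bd where "bd = \<beta> powr d"
  have bd0: "0 < bd" unfolding bd_def using ki(1) by simp
  define \<rho> where "\<rho> = q / bd"
  have \<rho>0: "0 \<le> \<rho>" "\<rho> < 1" unfolding \<rho>_def bd_def q_def using ki(3) q0 bd0 q_def bd_def by (auto simp: divide_less_eq)
  have "(\<lambda>R. \<rho> ^ R) \<longlonglongrightarrow> 0" using \<rho>0 by (intro LIMSEQ_power_zero) auto
  moreover have "0 < 1 / real (card S)" using S by (simp add: card_gt_0_iff)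
  ultimately have "eventually (\<lambda>R. \<rho> ^ R < 1 / real (card S)) sequentially"
    using order_tendstoD(2) by blast
  then obtain R where R: "R > 0" "\<rho> ^ R < 1 / real (card S)"
    using eventually_conj[OF _ eventually_gt_at_top[of 0]] eventually_sequentially
    by (metis (no_types, lifting) le_refl)
  have "\<forall>P\<in>S. d * real R \<le> real (card {r. r < R \<and> om r \<in> T P})"
  proof (intro ballI, rule ccontr)
    fix P assume P: "P \<in> S" and nle: "\<not> d * real R \<le> real (card {r. r < R \<and> om r \<in> T P})"
    then have lt: "real (L R P) < d * real R" using Lcard by simp
    have "bd ^ R = \<beta> powr (d * real R)"
      unfolding bd_def using ki(1) by (simp add: powr_realpow[symmetric] powr_powr)
    also have "\<dots> \<le> \<beta> powr real (L R P)"
      using lt ki(1,2) by (intro powr_mono') auto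
    also have "\<dots> = \<beta> ^ L R P" using ki(1) by (simp add: powr_realpow)
    also have "\<dots> \<le> \<Phi> R" by (rule single[OF P])
    also have "\<dots> \<le> real (card S) * q ^ R" by (rule Phi_bound)
    finally have "bd ^ R \<le> real (card S) * q ^ R" .
    then have "1 \<le> real (card S) * (q ^ R / bd ^ R)" using bd0 by (simp add: field_simps)
    then have "1 \<le> real (card S) * \<rho> ^ R" by (simp add: \<rho>_def power_divide)
    moreover have "real (card S) * \<rho> ^ R < 1" using R(2) S by (simp add: card_gt_0_iff field_simps)
    ultimately show False by simp
  qed
  then show ?thesis using R(1) by blast
qed




lemma weighted_pmf:
  fixes S :: "'a set" and w :: "'a \<Rightarrow> real"
  assumes S: "finite S" "S \<noteq> {}" and w: "\<forall>x\<in>S. 0 < w x"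
  shows "\<exists>\<zeta>. set_pmf \<zeta> = S \<and> (\<forall>A. measure_pmf.prob \<zeta> A = (\<Sum>x\<in>S \<inter> A. w x) / (\<Sum>x\<in>S. w x))"
proof -
  define W where "W = (\<Sum>x\<in>S. w x)"
  have W0: "0 < W" unfolding W_def using S w by (intro sum_pos) auto
  define f where "f x = (if x \<in> S then w x / W else 0)" for x
  have nn: "\<And>x. 0 \<le> f x" unfolding f_def using w W0 by (auto intro: less_imp_le)
  have "(\<integral>\<^sup>+x. ennreal (f x) \<partial>count_space UNIV) = (\<Sum>x\<in>S. ennreal (f x))"
    by (rule nn_integral_count_space') (use S in \<open>auto simp: f_def\<close>)
  also have "\<dots> = ennreal (\<Sum>x\<in>S. f x)" using nn by simp
  also have "(\<Sum>x\<in>S. f x) = (\<Sum>x\<in>S. w x / W)" unfolding f_def by simp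
  also have "\<dots> = 1" using W0 by (simp add: sum_divide_distrib[symmetric] W_def)
  finally have int1: "(\<integral>\<^sup>+x. ennreal (f x) \<partial>count_space UNIV) = 1" by simp
  define \<zeta> where "\<zeta> = embed_pmf f"
  have pmf: "pmf \<zeta> x = f x" for x unfolding \<zeta>_def by (rule pmf_embed_pmf[OF nn int1])
  have set: "set_pmf \<zeta> = S" unfolding \<zeta>_def set_embed_pmf[OF nn int1]
    using w W0 by (auto simp: f_def)
  have "measure_pmf.prob \<zeta> A = (\<Sum>x\<in>S \<inter> A. w x) / W" for A
  proof -
    have "measure_pmf.prob \<zeta> A = measure_pmf.prob \<zeta> (A \<inter> set_pmf \<zeta>)"
      by (simp add: measure_Int_set_pmf)
    also have "\<dots> = (\<Sum>x\<in>A \<inter> S. pmf \<zeta> x)" unfolding set using S by (simp add: measure_measure_pmf_finite)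
    also have "\<dots> = (\<Sum>x\<in>S \<inter> A. w x / W)" unfolding pmf f_def by (intro sum.cong) auto
    finally show ?thesis by (simp add: sum_divide_distrib)
  qed
  then show ?thesis using set unfolding W_def by blast
qed

lemma open_nbhd_prefix:
  fixes V :: "(nat \<Rightarrow> 'x::topological_space) set"
  assumes V: "open V" "y \<in> V"
  shows "\<exists>N. \<forall>p. (\<forall>j<N. p j = y j) \<longrightarrow> p \<in> V"
proof -
  have "openin (product_topology (\<lambda>i. euclidean) UNIV) V" using V(1) by (simp add: open_fun_def)
  then obtain U' where U': "finite {i \<in> UNIV. U' i \<noteq> topspace (euclidean :: 'x topology)}"
    "\<forall>i \<in> UNIV. openin euclidean (U' i)" "y \<in> Pi\<^sub>E UNIV U'" "Pi\<^sub>E UNIV U' \<subseteq> V"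
    using V(2) unfolding openin_product_topology_alt by blast
  have fin: "finite {i. U' i \<noteq> UNIV}" using U'(1) by simp
  then obtain N where N: "{i. U' i \<noteq> UNIV} \<subseteq> {..<N}" using finite_nat_iff_bounded by blast
  have "p \<in> V" if p: "\<forall>j<N. p j = y j" for p
  proof -
    have "p i \<in> U' i" for i
    proof (cases "U' i = UNIV")
      case False
      then have "i < N" using N by auto
      then have "p i = y i" using p by simp
      moreover have "y i \<in> U' i" using U'(3) by (simp add: PiE_UNIV_domain Pi_iff)
      ultimately show ?thesis by simp
    qed simp
    then have "p \<in> Pi\<^sub>E UNIV U'" by (simp add: PiE_UNIV_domain)
    then show ?thesis using U'(4) by blast
  qed
  then show ?thesis by blast
qed



theorem theorem5:
  fixes \<Sigma> :: "(nat \<Rightarrow> 'x::metric_space) set set"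
    and T :: "((nat \<Rightarrow> 'x) set \<Rightarrow> (nat \<Rightarrow> 'x) set \<Rightarrow> real) \<Rightarrow> (nat \<Rightarrow> 'x) set"
    and \<epsilon> \<delta> :: real
  assumes sep: "separable_space (euclidean :: 'x topology)"
    and two: "\<exists>a b :: 'x. a \<noteq> b"
    and \<Sigma>: "admissible_sigma \<Sigma>"
    and eps: "0 \<le> \<epsilon>" "\<epsilon> < 1"
    and T_open: "\<forall>P\<in>cond_opinions \<Sigma>. open (T P)"
    and T_level: "\<forall>P\<in>cond_opinions \<Sigma>. P (T P) UNIV \<le> \<epsilon>"
    and delta: "0 < \<delta>" "\<delta> \<le> 1 - \<epsilon>"
  shows "\<exists>\<zeta> :: ((nat \<Rightarrow> 'x) set \<Rightarrow> (nat \<Rightarrow> 'x) set \<Rightarrow> real) pmf.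
           finite (set_pmf \<zeta>) \<and> set_pmf \<zeta> \<subseteq> cond_opinions \<Sigma> \<and>
           (\<forall>\<omega>. measure_pmf.prob \<zeta> {P \<in> cond_opinions \<Sigma>. \<omega> \<notin> T P} \<ge> 1 - \<epsilon> - \<delta>)"
proof (rule ccontr)
  assume contra: "\<not> ?thesis"
  let ?O = "cond_opinions \<Sigma>"
  obtain a b :: 'x where ab: "a \<noteq> b" using two by blast
  obtain U :: "nat filter" where U: "U \<le> sequentially" "ultra U"
    using ultra_exists[of "sequentially :: nat filter"] by auto
  have Uu: "ultra U" "U \<le> sequentially" using U by auto
  define c where "c = \<epsilon> + \<delta>"
  define d where "d = \<epsilon> + \<delta> / 2"
  have d0: "0 \<le> d" and dc: "d < c" and c1: "c \<le> 1" and ed: "\<epsilon> < d"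
    using eps delta by (auto simp: c_def d_def)
  have H: "\<exists>\<omega>. measure_pmf.prob \<zeta> {P \<in> ?O. \<omega> \<notin> T P} < 1 - \<epsilon> - \<delta>"
    if "finite (set_pmf \<zeta>)" "set_pmf \<zeta> \<subseteq> ?O" for \<zeta>
    using contra that by (auto simp: not_le)
  have step: "\<exists>\<omega>. c * (\<Sum>P\<in>S. w P) < (\<Sum>P\<in>{P\<in>S. \<omega> \<in> T P}. w P)"
    if S: "finite S" "S \<noteq> {}" "S \<subseteq> ?O" and w: "\<forall>P\<in>S. 0 < w P" for S w
  proof -
    obtain \<zeta> where z: "set_pmf \<zeta> = S"
      "\<And>A. measure_pmf.prob \<zeta> A = (\<Sum>x\<in>S \<inter> A. w x) / (\<Sum>x\<in>S. w x)"
      using weighted_pmf[OF S(1,2) w] by blast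
    obtain \<omega> where om: "measure_pmf.prob \<zeta> {P \<in> ?O. \<omega> \<notin> T P} < 1 - \<epsilon> - \<delta>"
      using H[of \<zeta>] z(1) S by auto
    define W where "W = (\<Sum>x\<in>S. w x)"
    have W0: "0 < W" unfolding W_def using S w by (intro sum_pos) auto
    have e1: "S \<inter> {P \<in> ?O. \<omega> \<notin> T P} = {P\<in>S. \<omega> \<notin> T P}" using S(3) by auto
    have split: "W = (\<Sum>P\<in>{P\<in>S. \<omega> \<in> T P}. w P) + (\<Sum>P\<in>{P\<in>S. \<omega> \<notin> T P}. w P)"
    proof -
      have "S = {P\<in>S. \<omega> \<in> T P} \<union> {P\<in>S. \<omega> \<notin> T P}" by auto
      then have "W = (\<Sum>P\<in>{P\<in>S. \<omega> \<in> T P} \<union> {P\<in>S. \<omega> \<notin> T P}. w P)" unfolding W_def by simp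
      also have "\<dots> = (\<Sum>P\<in>{P\<in>S. \<omega> \<in> T P}. w P) + (\<Sum>P\<in>{P\<in>S. \<omega> \<notin> T P}. w P)"
        by (rule sum.union_disjoint) (use S(1) in auto)
      finally show ?thesis .
    qed
    have "(\<Sum>P\<in>{P\<in>S. \<omega> \<notin> T P}. w P) / W < 1 - c"
      using om unfolding z(2) e1 W_def c_def by simp
    then have "(\<Sum>P\<in>{P\<in>S. \<omega> \<notin> T P}. w P) < (1 - c) * W" using W0 by (simp add: divide_less_eq)
    then have "c * W < (\<Sum>P\<in>{P\<in>S. \<omega> \<in> T P}. w P)" using split by (simp add: algebra_simps)
    then show ?thesis unfolding W_def by blast
  qed
  have Dch: "charge a b (D U a b y)" for y by (rule D_charge[OF Uu ab])
  have goodQ: "\<exists>Q. charge a b Q \<and> (finite S \<and> S \<subseteq> ?O \<longrightarrow> (\<forall>P\<in>S. d \<le> Q (T P)))" for S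
  proof (cases "finite S \<and> S \<subseteq> ?O \<and> S \<noteq> {}")
    case False
    then show ?thesis using Dch by blast
  next
    case True
    obtain R om where R: "R > 0" and Rom: "\<forall>P\<in>S. d * real R \<le> real (card {r. r < R \<and> om r \<in> T P})"
      using hedge[of S d c T, OF _ _ d0 dc c1 step] True by blast
    define Q where "Q E = (\<Sum>r<R. D U a b (om r) E) / real R" for E
    have Qc: "charge a b Q" unfolding Q_def by (rule charge_mix[OF R Dch])
    have "d \<le> Q (T P)" if P: "P \<in> S" for P
    proof -
      have op: "open (T P)" using T_open P True by blast
      have "(\<Sum>r<R. (if om r \<in> T P then 1 else 0 :: real)) \<le> (\<Sum>r<R. D U a b (om r) (T P))"
      proof (rule sum_mono)
        fix r assume "r \<in> {..<R}"
        show "(if om r \<in> T P then 1 else 0) \<le> D U a b (om r) (T P)"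
        proof (cases "om r \<in> T P")
          case True
          obtain N where "\<forall>p. (\<forall>j<N. p j = om r j) \<longrightarrow> p \<in> T P"
            using open_nbhd_prefix[OF op True] by blast
          then have "D U a b (om r) (T P) = 1" by (intro D_local1[OF Uu]) auto
          then show ?thesis using True by simp
        qed (simp add: charge_nonneg[OF Dch])
      qed
      moreover have "(\<Sum>r<R. (if om r \<in> T P then 1 else 0 :: real)) = real (card {r. r < R \<and> om r \<in> T P})"
      proof -
        have e: "{..<R} \<inter> {r. om r \<in> T P} = {r. r < R \<and> om r \<in> T P}" by auto
        have "(\<Sum>r<R. (if om r \<in> T P then 1 else 0 :: real)) = real (card ({..<R} \<inter> {r. om r \<in> T P}))"
          by (simp add: sum.If_cases)
        also have "\<dots> = real (card {r. r < R \<and> om r \<in> T P})" unfolding e ..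
        finally show ?thesis .
      qed
      ultimately have "real (card {r. r < R \<and> om r \<in> T P}) \<le> (\<Sum>r<R. D U a b (om r) (T P))" by simp
      moreover have "d * real R \<le> real (card {r. r < R \<and> om r \<in> T P})" using Rom P by blast
      ultimately have "d * real R \<le> (\<Sum>r<R. D U a b (om r) (T P))" by linarith
      then show ?thesis unfolding Q_def using R by (simp add: le_divide_eq mult.commute)
    qed
    then show ?thesis using Qc by blast
  qed
  define QS where "QS S = (SOME Q. charge a b Q \<and> (finite S \<and> S \<subseteq> ?O \<longrightarrow> (\<forall>P\<in>S. d \<le> Q (T P))))" for S
  have QS: "charge a b (QS S) \<and> (finite S \<and> S \<subseteq> ?O \<longrightarrow> (\<forall>P\<in>S. d \<le> QS S (T P)))" for S
    unfolding QS_def by (rule someI_ex[OF goodQ])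
  obtain V where V: "V \<le> finite_subsets_at_top ?O" "ultra V"
    using ultra_exists[of "finite_subsets_at_top ?O"] by auto
  define P0 where "P0 E = Lim V (\<lambda>S. QS S E)" for E
  have P0c: "charge a b P0" unfolding P0_def by (rule charge_lim[OF V(2)]) (use QS in blast)
  define Ps where "Ps = condP \<Sigma> U a b P0"
  have Ps: "Ps \<in> ?O" unfolding Ps_def by (rule condP_in[OF Uu ab P0c \<Sigma>])
  have TS: "T Ps \<in> \<Sigma>" using T_open Ps adm_open[OF \<Sigma>] by blast
  have lev0: "Ps (T Ps) UNIV \<le> \<epsilon>" using T_level Ps by blast
  have "Ps (T Ps) UNIV = P0 (T Ps)" unfolding Ps_def using condP_UNIV[OF Uu ab P0c TS] by (simp add: Ps_def)
  then have lev: "P0 (T Ps) \<le> \<epsilon>" using lev0 by simp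
  have ev: "eventually (\<lambda>S. d \<le> QS S (T Ps)) V"
  proof (rule filter_leD[OF V(1)])
    show "eventually (\<lambda>S. d \<le> QS S (T Ps)) (finite_subsets_at_top ?O)"
      unfolding eventually_finite_subsets_at_top
      by (rule exI[of _ "{Ps}"]) (use Ps QS in auto)
  qed
  have tl: "((\<lambda>S. QS S (T Ps)) \<longlongrightarrow> P0 (T Ps)) V"
    unfolding P0_def by (rule ultra_tendsto[OF V(2)]) (simp add: charge_nonneg[OF QS[THEN conjunct1]] charge_le1[OF QS[THEN conjunct1]])
  have "d \<le> P0 (T Ps)" by (rule tendsto_lowerbound[OF tl ev ultra_nbot[OF V(2)]])
  with lev ed show False by simp
qed


end
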